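(* Let $\Phi\in\Gamma_0(\mathbb{E})$ be Legendre and let $C\subset \operatorname{int}(\operatorname{dom}\Phi)$ be compact. Then there exist $r>0$ and $\delta<\infty$ such that $$D_\Phi(x,y)\ \ge\ r\|x\|-\delta\qquad\text{for every } x\in\operatorname{dom}\Phi \text{ and every } y\in C.$$
   Context: $\mathbb{E}$ is a finite-dimensional Euclidean space with inner product $\langle\cdot,\cdot\rangle$ and norm $\|\cdot\|$; $\Gamma_0(\mathbb{E})$ is the set of proper, lower semicontinuous, convex functions $\mathbb{E}\to\mathbb{R}\cup\{+\infty\}$. A function $\Phi\in\Gamma_0(\mathbb{E})$ is Legendre if it is essentially smooth ($\operatorname{int}\operatorname{dom}\Phi\neq\emptyset$, $\Phi$ is differentiable on $\operatorname{int}\operatorname{dom}\Phi$, and $\|\nabla\Phi(z^\nu)\|\to\infty$ whenever $\operatorname{int}\operatorname{dom}\Phi\ni z^\nu\to z\in\operatorname{bdry}\operatorname{dom}\Phi$) and essentially strictly convex ($\Phi$ is strictly convex on every convex subset of $\operatorname{dom}\partial\Phi$). The Bregman distance generated by a Legendre $\Phi$ is $D_\Phi(z_1,z_2)=\Phi(z_1)-\Phi(z_2)-\langle\nabla\Phi(z_2),z_1-z_2\rangle$ if $z_1\in\operatorname{dom}\Phi$ and $z_2\in\operatorname{int}\operatorname{dom}\Phi$, and $D_\Phi(z_1,z_2)=+\infty$ otherwise. *)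

theory Defs
  imports "HOL-Analysis.Analysis" "HOL-Library.Extended_Real"
begin

definition edom :: "('a \<Rightarrow> ereal) \<Rightarrow> 'a set" where
  "edom f = {x. f x < \<infinity>}"

definition proper_fun :: "('a \<Rightarrow> ereal) \<Rightarrow> bool" where
  "proper_fun f \<longleftrightarrow> (\<forall>x. f x \<noteq> -\<infinity>) \<and> (\<exists>x. f x < \<infinity>)"

definition lsc_fun :: "('a::topological_space \<Rightarrow> ereal) \<Rightarrow> bool" where
  "lsc_fun f \<longleftrightarrow> (\<forall>x X. X \<longlonglongrightarrow> x \<longrightarrow> f x \<le> liminf (\<lambda>n. f (X n)))"

definition convex_efun :: "('a::real_vector \<Rightarrow> ereal) \<Rightarrow> bool" where
  "convex_efun f \<longleftrightarrow> (\<forall>x y t. 0 \<le> t \<and> t \<le> 1 \<longrightarrow>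
      f ((1 - t) *\<^sub>R x + t *\<^sub>R y) \<le> ereal (1 - t) * f x + ereal t * f y)"

definition Gamma0 :: "('a::euclidean_space \<Rightarrow> ereal) \<Rightarrow> bool" where
  "Gamma0 f \<longleftrightarrow> proper_fun f \<and> lsc_fun f \<and> convex_efun f"

text \<open>Gradient of the real-valued part at a point (meaningful where differentiable).\<close>
definition egrad :: "('a::euclidean_space \<Rightarrow> ereal) \<Rightarrow> 'a \<Rightarrow> 'a" where
  "egrad f z = (SOME g. ((\<lambda>u. real_of_ereal (f u)) has_derivative (\<lambda>h. g \<bullet> h)) (at z))"

definition essentially_smooth :: "('a::euclidean_space \<Rightarrow> ereal) \<Rightarrow> bool" where
  "essentially_smooth f \<longleftrightarrow>
     interior (edom f) \<noteq> {} \<and>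
     (\<forall>z\<in>interior (edom f). (\<lambda>u. real_of_ereal (f u)) differentiable (at z)) \<and>
     (\<forall>Z z. (\<forall>n. Z n \<in> interior (edom f)) \<longrightarrow> Z \<longlonglongrightarrow> z \<longrightarrow> z \<in> frontier (edom f) \<longrightarrow>
        filterlim (\<lambda>n. norm (egrad f (Z n))) at_top sequentially)"

definition subdiff :: "('a::euclidean_space \<Rightarrow> ereal) \<Rightarrow> 'a \<Rightarrow> 'a set" where
  "subdiff f x = (if f x < \<infinity> \<and> f x \<noteq> -\<infinity>
      then {g. \<forall>y. f x + ereal (g \<bullet> (y - x)) \<le> f y} else {})"

definition dom_subdiff :: "('a::euclidean_space \<Rightarrow> ereal) \<Rightarrow> 'a set" where
  "dom_subdiff f = {x. subdiff f x \<noteq> {}}"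

definition strictly_convex_on_set :: "('a::real_vector \<Rightarrow> ereal) \<Rightarrow> 'a set \<Rightarrow> bool" where
  "strictly_convex_on_set f S \<longleftrightarrow> (\<forall>x\<in>S. \<forall>y\<in>S. \<forall>t. x \<noteq> y \<and> 0 < t \<and> t < 1 \<longrightarrow>
      f ((1 - t) *\<^sub>R x + t *\<^sub>R y) < ereal (1 - t) * f x + ereal t * f y)"

definition essentially_strictly_convex :: "('a::euclidean_space \<Rightarrow> ereal) \<Rightarrow> bool" where
  "essentially_strictly_convex f \<longleftrightarrow>
     (\<forall>S. convex S \<and> S \<subseteq> dom_subdiff f \<longrightarrow> strictly_convex_on_set f S)"

definition legendre :: "('a::euclidean_space \<Rightarrow> ereal) \<Rightarrow> bool" where
  "legendre f \<longleftrightarrow> Gamma0 f \<and> essentially_smooth f \<and> essentially_strictly_convex f"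

definition bregman :: "('a::euclidean_space \<Rightarrow> ereal) \<Rightarrow> 'a \<Rightarrow> 'a \<Rightarrow> ereal" where
  "bregman f x y = (if x \<in> edom f \<and> y \<in> interior (edom f)
      then ereal (real_of_ereal (f x) - real_of_ereal (f y) - egrad f y \<bullet> (x - y))
      else \<infinity>)"

end

theory Submission
  imports Defs
begin

lemma efin: "proper_fun \<Phi> \<Longrightarrow> x \<in> edom \<Phi> \<Longrightarrow> \<Phi> x = ereal (real_of_ereal (\<Phi> x))"
  unfolding proper_fun_def edom_def by (cases "\<Phi> x") auto

lemma cvx_real:
  assumes cv: "convex_efun \<Phi>" and pr: "proper_fun \<Phi>" and a: "a \<in> edom \<Phi>" and b: "b \<in> edom \<Phi>"
    and t: "0 \<le> t" "t \<le> 1"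
  shows "(1-t) *\<^sub>R a + t *\<^sub>R b \<in> edom \<Phi> \<and>
    real_of_ereal (\<Phi> ((1-t) *\<^sub>R a + t *\<^sub>R b)) \<le> (1-t) * real_of_ereal (\<Phi> a) + t * real_of_ereal (\<Phi> b)"
proof -
  let ?p = "(1-t) *\<^sub>R a + t *\<^sub>R b"
  have "\<Phi> ?p \<le> ereal (1 - t) * \<Phi> a + ereal t * \<Phi> b" using cv t unfolding convex_efun_def by blast
  also have "\<dots> = ereal ((1-t) * real_of_ereal (\<Phi> a) + t * real_of_ereal (\<Phi> b))"
    by (subst efin[OF pr a], subst efin[OF pr b]) simp
  finally have le: "\<Phi> ?p \<le> ereal ((1-t) * real_of_ereal (\<Phi> a) + t * real_of_ereal (\<Phi> b))" .
  have "\<Phi> ?p \<noteq> -\<infinity>" using pr unfolding proper_fun_def by blast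
  with le show ?thesis unfolding edom_def by (cases "\<Phi> ?p") auto
qed

lemma lin_repr:
  fixes D :: "'a::euclidean_space \<Rightarrow> real"
  assumes "linear D"
  shows "D = (\<lambda>h. (\<Sum>b\<in>Basis. D b *\<^sub>R b) \<bullet> h)"
proof
  fix h
  have "D h = D (\<Sum>b\<in>Basis. (h \<bullet> b) *\<^sub>R b)" by (simp add: euclidean_representation)
  also have "\<dots> = (\<Sum>b\<in>Basis. (h \<bullet> b) * D b)"
    using assms by (simp add: linear_sum linear_scale)
  also have "\<dots> = (\<Sum>b\<in>Basis. D b *\<^sub>R b) \<bullet> h"
    unfolding inner_sum_left inner_scaleR_left by (rule sum.cong) (auto simp: inner_commute)
  finally show "D h = (\<Sum>b\<in>Basis. D b *\<^sub>R b) \<bullet> h" .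
qed

lemma egrad_deriv:
  assumes "essentially_smooth \<Phi>" "z \<in> interior (edom \<Phi>)"
  shows "((\<lambda>u. real_of_ereal (\<Phi> u)) has_derivative (\<lambda>h. egrad \<Phi> z \<bullet> h)) (at z)"
proof -
  obtain D where D: "((\<lambda>u. real_of_ereal (\<Phi> u)) has_derivative D) (at z)"
    using assms unfolding essentially_smooth_def differentiable_def by blast
  hence "linear D" using has_derivative_linear by blast
  hence "\<exists>g. ((\<lambda>u. real_of_ereal (\<Phi> u)) has_derivative (\<lambda>h. g \<bullet> h)) (at z)"
    using D lin_repr by metis
  thus ?thesis unfolding egrad_def by (rule someI_ex)
qed

lemma grad_ineq:
  assumes L: "legendre \<Phi>" and y: "y \<in> interior (edom \<Phi>)" and x: "x \<in> edom \<Phi>"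
    and s: "0 < s" "s \<le> 1"
  shows "egrad \<Phi> y \<bullet> (x - y) \<le>
     (real_of_ereal (\<Phi> (y + s *\<^sub>R (x - y))) - real_of_ereal (\<Phi> y)) / s"
proof -
  define f where "f = (\<lambda>u. real_of_ereal (\<Phi> u))"
  define v where "v = x - y"
  define g where "g = egrad \<Phi> y"
  have cv: "convex_efun \<Phi>" and pr: "proper_fun \<Phi>" and sm: "essentially_smooth \<Phi>"
    using L unfolding legendre_def Gamma0_def by auto
  have yd: "y \<in> edom \<Phi>" using y interior_subset by blast
  have ys: "y + s *\<^sub>R v \<in> edom \<Phi>"
    using cvx_real[OF cv pr yd x, of s] s by (simp add: v_def algebra_simps)
  have mono: "(f (y + t *\<^sub>R v) - f y) / t \<le> (f (y + s *\<^sub>R v) - f y) / s" if t: "0 < t" "t < s" for t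
  proof -
    have eq: "(1 - t/s) *\<^sub>R y + (t/s) *\<^sub>R (y + s *\<^sub>R v) = y + t *\<^sub>R v"
      using s by (simp add: algebra_simps)
    have "f (y + t *\<^sub>R v) \<le> (1 - t/s) * f y + (t/s) * f (y + s *\<^sub>R v)"
      using cvx_real[OF cv pr yd ys, of "t/s"] t s unfolding eq f_def by simp
    hence "f (y + t *\<^sub>R v) - f y \<le> (t/s) * (f (y + s *\<^sub>R v) - f y)" by (simp add: algebra_simps)
    thus ?thesis using t s by (simp add: divide_simps mult.commute)
  qed
  have d: "(f has_derivative (\<lambda>h. g \<bullet> h)) (at y)"
    using egrad_deriv[OF sm y] unfolding f_def g_def .
  have d1: "((\<lambda>t. y + t *\<^sub>R v) has_derivative (\<lambda>t. t *\<^sub>R v)) (at (0::real))"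
    by (auto intro!: derivative_eq_intros)
  have dd: "((\<lambda>t. f (y + t *\<^sub>R v)) has_derivative (\<lambda>t. g \<bullet> (t *\<^sub>R v))) (at (0::real))"
    using has_derivative_compose[OF d1, of f "\<lambda>h. g \<bullet> h"] d by simp
  have "(\<lambda>t. g \<bullet> (t *\<^sub>R v)) = (*) (g \<bullet> v)" by (auto simp: fun_eq_iff)
  hence "((\<lambda>t. f (y + t *\<^sub>R v)) has_real_derivative (g \<bullet> v)) (at 0)"
    using dd unfolding has_field_derivative_def by simp
  from DERIV_D[OF this] have "((\<lambda>t. (f (y + t *\<^sub>R v) - f y) / t) \<longlongrightarrow> g \<bullet> v) (at 0)" by simp
  hence lim: "((\<lambda>t. (f (y + t *\<^sub>R v) - f y) / t) \<longlongrightarrow> g \<bullet> v) (at_right 0)"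
    by (rule tendsto_mono[OF at_le[OF subset_UNIV]])
  have ev: "eventually (\<lambda>t. (f (y + t *\<^sub>R v) - f y) / t \<le> (f (y + s *\<^sub>R v) - f y) / s) (at_right 0)"
    unfolding eventually_at_right_field using s mono by blast
  have "g \<bullet> v \<le> (f (y + s *\<^sub>R v) - f y) / s"
    by (rule tendsto_le[OF _ tendsto_const lim ev]) simp
  thus ?thesis unfolding f_def g_def v_def .
qed

lemma strict_mid:
  assumes L: "legendre \<Phi>" and a: "a \<in> interior (edom \<Phi>)" and b: "b \<in> interior (edom \<Phi>)"
    and ab: "a \<noteq> b"
  shows "real_of_ereal (\<Phi> ((1/2) *\<^sub>R a + (1/2) *\<^sub>R b)) <
    (1/2) * real_of_ereal (\<Phi> a) + (1/2) * real_of_ereal (\<Phi> b)"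
proof -
  have cv: "convex_efun \<Phi>" and pr: "proper_fun \<Phi>" and es: "essentially_strictly_convex \<Phi>"
    using L unfolding legendre_def Gamma0_def by auto
  have cE: "convex (edom \<Phi>)" unfolding convex_alt using cvx_real[OF cv pr] by blast
  have cK: "convex (interior (edom \<Phi>))" using cE by simp
  have sub: "interior (edom \<Phi>) \<subseteq> dom_subdiff \<Phi>"
  proof
    fix z assume z: "z \<in> interior (edom \<Phi>)"
    have zd: "z \<in> edom \<Phi>" using z interior_subset by blast
    have "egrad \<Phi> z \<in> subdiff \<Phi> z"
    proof -
      have "\<Phi> z + ereal (egrad \<Phi> z \<bullet> (w - z)) \<le> \<Phi> w" for w
      proof (cases "w \<in> edom \<Phi>")
        case True
        have "egrad \<Phi> z \<bullet> (w - z) \<le> real_of_ereal (\<Phi> w) - real_of_ereal (\<Phi> z)"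
          using grad_ineq[OF L z True, of 1] by simp
        thus ?thesis by (subst efin[OF pr zd], subst efin[OF pr True]) simp
      next
        case False
        hence "\<Phi> w = \<infinity>" unfolding edom_def by simp
        thus ?thesis by simp
      qed
      moreover have "\<Phi> z < \<infinity> \<and> \<Phi> z \<noteq> -\<infinity>" using zd pr unfolding edom_def proper_fun_def by auto
      ultimately show ?thesis unfolding subdiff_def by simp
    qed
    thus "z \<in> dom_subdiff \<Phi>" unfolding dom_subdiff_def by blast
  qed
  have "strictly_convex_on_set \<Phi> (interior (edom \<Phi>))" using es cK sub
    unfolding essentially_strictly_convex_def by blast
  hence all: "\<forall>t. a \<noteq> b \<and> 0 < t \<and> t < 1 \<longrightarrow> \<Phi> ((1 - t) *\<^sub>R a + t *\<^sub>R b) < ereal (1 - t) * \<Phi> a + ereal t * \<Phi> b"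
    using a b unfolding strictly_convex_on_set_def by blast
  have lt: "\<Phi> ((1 - 1/2) *\<^sub>R a + (1/2) *\<^sub>R b) < ereal (1 - 1/2) * \<Phi> a + ereal (1/2) * \<Phi> b"
    using spec[OF all, of "1/2"] ab by simp
  have ea: "a \<in> edom \<Phi>" and eb: "b \<in> edom \<Phi>" using a b interior_subset by blast+
  have em: "(1/2) *\<^sub>R a + (1/2) *\<^sub>R b \<in> edom \<Phi>" using cvx_real[OF cv pr ea eb, of "1/2"] by simp
  have "ereal (real_of_ereal (\<Phi> ((1/2) *\<^sub>R a + (1/2) *\<^sub>R b))) < ereal (1/2) * ereal (real_of_ereal (\<Phi> a)) + ereal (1/2) * ereal (real_of_ereal (\<Phi> b))"
    using lt efin[OF pr ea] efin[OF pr eb] efin[OF pr em] by simp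
  thus ?thesis by simp
qed

theorem mainTheorem1:
  fixes \<Phi> :: "'a::euclidean_space \<Rightarrow> ereal" and C :: "'a set"
  assumes "legendre \<Phi>"
    and "compact C" and "C \<subseteq> interior (edom \<Phi>)"
  shows "\<exists>r \<delta>::real. r > 0 \<and>
           (\<forall>x\<in>edom \<Phi>. \<forall>y\<in>C. bregman \<Phi> x y \<ge> ereal (r * norm x - \<delta>))"
proof (cases "C = {}")
  case True
  show ?thesis by (rule exI[of _ 1], rule exI[of _ 0]) (simp add: True)
next
  case False
  note L = assms(1)
  have cv: "convex_efun \<Phi>" and pr: "proper_fun \<Phi>" and sm: "essentially_smooth \<Phi>"
    using L unfolding legendre_def Gamma0_def by auto
  define f where "f = (\<lambda>u. real_of_ereal (\<Phi> u))"
  define K where "K = interior (edom \<Phi>)"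
  have CK: "C \<subseteq> K" using assms K_def by simp
  obtain \<rho> where rho: "\<rho> > 0" "(\<Union>x\<in>C. cball x \<rho>) \<subseteq> K"
    using compact_subset_open_imp_cball_epsilon_subset[OF assms(2) _ CK] K_def by auto
  obtain M where M: "\<forall>y\<in>C. norm y \<le> M"
    using compact_imp_bounded[OF assms(2)] unfolding bounded_iff by blast
  have inK: "y + c *\<^sub>R u \<in> K" if "y \<in> C" "norm u = 1" "\<bar>c\<bar> \<le> \<rho>" for y u c
  proof -
    have "dist y (y + c *\<^sub>R u) \<le> \<rho>" using that by (simp add: dist_norm)
    hence "y + c *\<^sub>R u \<in> cball y \<rho>" by simp
    thus ?thesis using rho that by blast
  qed
  have contf: "continuous_on K f"
  proof -
    have "isCont f z" if "z \<in> K" for z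
      using sm that unfolding essentially_smooth_def K_def f_def
      by (meson differentiable_imp_continuous_within)
    thus ?thesis by (simp add: continuous_at_imp_continuous_on)
  qed
  define E where "E = (\<lambda>p. f (fst p + \<rho> *\<^sub>R snd p) - 2 * f (fst p + (\<rho>/2) *\<^sub>R snd p) + f (fst p))"
  define S where "S = C \<times> sphere (0::'a) 1"
  have cS: "compact S" unfolding S_def using assms(2) by (simp add: compact_Times)
  obtain y0 where y0: "y0 \<in> C" using False by blast
  obtain b0 :: 'a where b0: "b0 \<in> Basis" using nonempty_Basis by blast
  have "(y0, b0) \<in> S" using y0 b0 unfolding S_def by simp
  hence neS: "S \<noteq> {}" by blast
  have c1: "continuous_on S (\<lambda>p. f (fst p + c *\<^sub>R snd p))" if "\<bar>c\<bar> \<le> \<rho>" for c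
  proof (rule continuous_on_compose2[OF contf])
    show "continuous_on S (\<lambda>p. fst p + c *\<^sub>R snd p)" by (intro continuous_intros)
    show "(\<lambda>p. fst p + c *\<^sub>R snd p) ` S \<subseteq> K" using inK that unfolding S_def by auto
  qed
  have c0: "continuous_on S (\<lambda>p. f (fst p))"
    using c1[of 0] rho by simp
  have cE: "continuous_on S E" unfolding E_def
    using c1[of \<rho>] c1[of "\<rho>/2"] c0 rho by (intro continuous_intros) auto
  obtain p0 where p0: "p0 \<in> S" "\<forall>p\<in>S. E p0 \<le> E p"
    using continuous_attains_inf[OF cS neS cE] by blast
  have Epos: "E p > 0" if pS0: "p \<in> S" for p
  proof -
    obtain y u where p: "p = (y, u)" "y \<in> C" "norm u = 1" using pS0 unfolding S_def by (cases p) auto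
    have a: "y \<in> K" using p CK by blast
    have b: "y + \<rho> *\<^sub>R u \<in> K" using inK p rho by simp
    have ne: "y \<noteq> y + \<rho> *\<^sub>R u" using rho p by auto
    have mid: "(1/2) *\<^sub>R y + (1/2) *\<^sub>R (y + \<rho> *\<^sub>R u) = y + (\<rho>/2) *\<^sub>R u"
      by (simp add: algebra_simps flip: scaleR_add_left)
    have "f (y + (\<rho>/2) *\<^sub>R u) < (1/2) * f y + (1/2) * f (y + \<rho> *\<^sub>R u)"
      using strict_mid[OF L a[unfolded K_def] b[unfolded K_def] ne] unfolding mid f_def .
    thus ?thesis unfolding E_def p by simp
  qed
  define m where "m = E p0"
  have m: "m > 0" "\<forall>p\<in>S. m \<le> E p" using Epos p0 unfolding m_def by auto
  define r where "r = m / \<rho>"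
  have r: "r > 0" unfolding r_def using m rho by simp
  show ?thesis
  proof (rule exI[of _ r], rule exI[of _ "r * (M + \<rho>)"], intro conjI r ballI)
    fix x y assume x: "x \<in> edom \<Phi>" and y: "y \<in> C"
    have yK: "y \<in> interior (edom \<Phi>)" using y CK K_def by blast
    have br: "bregman \<Phi> x y = ereal (f x - f y - egrad \<Phi> y \<bullet> (x - y))"
      unfolding bregman_def f_def using x yK by simp
    define Lx where "Lx = norm (x - y)"
    have nx: "norm x \<le> M + Lx" using M y norm_triangle_sub[of x y] unfolding Lx_def by force
    have "r * norm x - r * (M + \<rho>) \<le> f x - f y - egrad \<Phi> y \<bullet> (x - y)"
    proof (cases "Lx \<le> \<rho>")
      case True
      have "egrad \<Phi> y \<bullet> (x - y) \<le> f x - f y"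
        using grad_ineq[OF L yK x, of 1] unfolding f_def by simp
      moreover have "r * norm x \<le> r * (M + \<rho>)" using nx True r by (intro mult_left_mono) auto
      ultimately show ?thesis by linarith
    next
      case False
      hence Lpos: "Lx > 0" using rho by linarith
      define u where "u = (1 / Lx) *\<^sub>R (x - y)"
      have nu: "norm u = 1" unfolding u_def Lx_def using Lpos Lx_def by simp
      have xu: "x - y = Lx *\<^sub>R u" unfolding u_def using Lpos by simp
      have pS: "(y, u) \<in> S" unfolding S_def using y nu by simp
      define s where "s = \<rho> / (2 * Lx)"
      have s: "0 < s" "s \<le> 1" unfolding s_def using Lpos rho False by auto
      have ys: "y + s *\<^sub>R (x - y) = y + (\<rho>/2) *\<^sub>R u" unfolding xu s_def using Lpos by simp
      have G: "egrad \<Phi> y \<bullet> (x - y) \<le> (f (y + (\<rho>/2) *\<^sub>R u) - f y) / s"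
        using grad_ineq[OF L yK x s] unfolding ys f_def .
      define t where "t = \<rho> / Lx"
      have t: "0 \<le> t" "t \<le> 1" unfolding t_def using Lpos rho False by auto
      have yt: "(1 - t) *\<^sub>R y + t *\<^sub>R x = y + \<rho> *\<^sub>R u"
      proof -
        have "(1 - t) *\<^sub>R y + t *\<^sub>R x = y + t *\<^sub>R (x - y)" by (simp add: algebra_simps)
        also have "\<dots> = y + \<rho> *\<^sub>R u" unfolding xu t_def using Lpos by simp
        finally show ?thesis .
      qed
      have yd: "y \<in> edom \<Phi>" using yK interior_subset by blast
      have A: "f (y + \<rho> *\<^sub>R u) \<le> (1 - t) * f y + t * f x"
        using cvx_real[OF cv pr yd x t] unfolding yt f_def by simp
      have Em: "m \<le> E (y, u)" using m pS by blast
      define A0 where "A0 = f (y + \<rho> *\<^sub>R u)"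
      define B0 where "B0 = f (y + (\<rho>/2) *\<^sub>R u)"
      define G0 where "G0 = egrad \<Phi> y \<bullet> (x - y)"
      have G': "G0 \<le> (2 * Lx / \<rho>) * (B0 - f y)"
        using G unfolding G0_def B0_def s_def using rho Lpos by (simp add: field_simps)
      have A': "(Lx / \<rho>) * (A0 - f y) \<le> f x - f y"
      proof -
        have "A0 - f y \<le> t * (f x - f y)" using A unfolding A0_def by (simp add: algebra_simps)
        hence "(Lx / \<rho>) * (A0 - f y) \<le> (Lx / \<rho>) * (t * (f x - f y))"
          using rho Lpos by (intro mult_left_mono) auto
        also have "\<dots> = f x - f y" unfolding t_def using rho Lpos by simp
        finally show ?thesis .
      qed
      have "f x - f y - G0 \<ge> (Lx / \<rho>) * (A0 - 2 * B0 + f y)"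
      proof -
        have "(Lx / \<rho>) * (A0 - 2 * B0 + f y) = (Lx / \<rho>) * (A0 - f y) - (2 * Lx / \<rho>) * (B0 - f y)"
          by (simp add: algebra_simps add_divide_distrib[symmetric] diff_divide_distrib[symmetric])
        moreover have aux: "\<And>e a b G X. e = a - b \<Longrightarrow> G \<le> b \<Longrightarrow> a \<le> X \<Longrightarrow> e \<le> X - (G::real)"
          by linarith
        ultimately show ?thesis using aux G' A' by blast
      qed
      moreover have "A0 - 2 * B0 + f y \<ge> m" using Em unfolding E_def A0_def B0_def by simp
      hence "(Lx / \<rho>) * (A0 - 2 * B0 + f y) \<ge> (Lx / \<rho>) * m"
        using rho Lpos by (intro mult_left_mono) auto
      moreover have "(Lx / \<rho>) * m = r * Lx" unfolding r_def by simp
      moreover have "r * norm x - r * (M + \<rho>) \<le> r * Lx"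
      proof -
        have "r * norm x \<le> r * (M + Lx)" using nx r by (intro mult_left_mono) auto
        moreover have "r*(M+Lx) = r*M + r*Lx" "r*(M+\<rho>) = r*M + r*\<rho>" "0 \<le> r*\<rho>"
          using r rho by (simp_all add: algebra_simps)
        ultimately show ?thesis by linarith
      qed
      ultimately show ?thesis unfolding G0_def by linarith
    qed
    hence "ereal (r * norm x - r * (M + \<rho>)) \<le> bregman \<Phi> x y" unfolding br by simp
    thus "bregman \<Phi> x y \<ge> ereal (r * norm x - r * (M + \<rho>))" by simp
  qed
qed

end
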